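(* Let $d\in\mathbb{N}$, $d>1$, and write $a:=\lceil\log_2d\rceil$. For any $0<\epsilon\le\frac{3^{a}-1}{3^{a-1}-1}$ (read as $+\infty$ when $3^{a-1}-1=0$), there exists a ReLU FNN function $f^{(mtp)}_{FF,d}:\mathbb{R}^d\to\mathbb{R}$ with width $21\cdot2^{a-1}$, depth $C\ln\frac{3^{a}-1}{2\epsilon}$ and weight bound $C$, where $C$ is a constant independent of $\epsilon$, such that for all $\boldsymbol x\in[0,1]^d$, $$|f^{(mtp)}_{FF,d}(\boldsymbol x)-x_1\cdots x_d|\le\epsilon.$$
   Context: ReLU FNN of depth $L$, width $W$: $f_0=x$, $f_l=\sigma_R(W_lf_{l-1}+b_l)$ ($1\le l\le L-1$), $f=W_Lf_{L-1}+b_L$ with hidden layers of width $W$, $\sigma_R(x)=\max\{x,0\}$; the weight bound is the maximum absolute value of all weights and biases. *)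

theory Defs
  imports Complex_Main
begin

text \<open>A layer is a pair (weight matrix, bias vector); vectors are nat-indexed
  functions, only indices below the relevant dimension matter.\<close>

type_synonym layer = "(nat \<Rightarrow> nat \<Rightarrow> real) \<times> (nat \<Rightarrow> real)"

definition relu :: "real \<Rightarrow> real" where
  "relu x = max x 0"

definition affine :: "nat \<Rightarrow> layer \<Rightarrow> (nat \<Rightarrow> real) \<Rightarrow> (nat \<Rightarrow> real)" where
  "affine n l x = (\<lambda>i. (\<Sum>j<n. fst l i j * x j) + snd l i)"

text \<open>Evaluation: first argument is the input dimension of the current layer,
  second the hidden width W. ReLU after every layer except the last.\<close>
fun net_eval :: "nat \<Rightarrow> nat \<Rightarrow> layer list \<Rightarrow> (nat \<Rightarrow> real) \<Rightarrow> (nat \<Rightarrow> real)" where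
  "net_eval n W [] x = x"
| "net_eval n W [l] x = affine n l x"
| "net_eval n W (l # l' # ls) x = net_eval W W (l' # ls) (\<lambda>i. relu (affine n l x i))"

definition fnn_fun :: "nat \<Rightarrow> nat \<Rightarrow> layer list \<Rightarrow> (nat \<Rightarrow> real) \<Rightarrow> real" where
  "fnn_fun d W ls x = net_eval d W ls x 0"

definition relu_fnn :: "nat \<Rightarrow> nat \<Rightarrow> nat \<Rightarrow> real \<Rightarrow> layer list \<Rightarrow> bool" where
  "relu_fnn d W L B ls \<longleftrightarrow>
     L \<ge> 1 \<and> length ls = L \<and>
     (\<forall>k<L. let n_in = (if k = 0 then d else W);
                n_out = (if k = L - 1 then 1 else W) in
        (\<forall>i<n_out. \<bar>snd (ls ! k) i\<bar> \<le> B \<and> (\<forall>j<n_in. \<bar>fst (ls ! k) i j\<bar> \<le> B)))"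

end

theory Submission
  imports Defs
begin

definition mkl :: "(nat \<Rightarrow> (nat \<times> real) list) \<Rightarrow> (nat \<Rightarrow> real) \<Rightarrow> layer" where
  "mkl rows b = ((\<lambda>i j. sum_list (map (\<lambda>p. if j = fst p then snd p else 0) (rows i))), b)"

lemma sum_rows:
  "(\<forall>p\<in>set xs. fst p < n) \<Longrightarrow>
   (\<Sum>j<n. sum_list (map (\<lambda>p. if j = fst p then snd p else 0) xs) * s j)
   = sum_list (map (\<lambda>p. snd p * (s::nat\<Rightarrow>real) (fst p)) xs)"
proof (induction xs)
  case Nil then show ?case by auto
next
  case (Cons p xs)
  have "(\<Sum>j<n. sum_list (map (\<lambda>p. if j = fst p then snd p else 0) (p # xs)) * s j)
     = (\<Sum>j<n. (if j = fst p then snd p else 0) * s j) + (\<Sum>j<n. sum_list (map (\<lambda>p. if j = fst p then snd p else 0) xs) * s j)"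
    by (simp add: distrib_right sum.distrib)
  also have "(\<Sum>j<n. (if j = fst p then snd p else 0) * s j) = snd p * s (fst p)"
  proof -
    have "(\<Sum>j<n. (if j = fst p then snd p else 0) * s j) = (\<Sum>j<n. if j = fst p then snd p * s (fst p) else 0)"
      by (rule sum.cong) auto
    then show ?thesis using Cons.prems by simp
  qed
  finally show ?case using Cons by simp
qed

lemma affine_mkl:
  "(\<forall>p\<in>set (rows i). fst p < n) \<Longrightarrow>
   affine n (mkl rows b) s i = sum_list (map (\<lambda>p. snd p * s (fst p)) (rows i)) + b i"
  unfolding affine_def mkl_def using sum_rows by simp

lemma mkl_bound_aux: "\<bar>sum_list (map (\<lambda>p. if j = fst p then snd p else (0::real)) xs)\<bar> \<le> sum_list (map (\<lambda>p. \<bar>snd p\<bar>) xs)"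
  by (induction xs) (auto simp: abs_if split: if_splits)

lemma mkl_bound: "\<bar>fst (mkl rows b) i j\<bar> \<le> sum_list (map (\<lambda>p. \<bar>snd p\<bar>) (rows i))"
  unfolding mkl_def using mkl_bound_aux by simp

definition hid :: "nat \<Rightarrow> layer \<Rightarrow> (nat \<Rightarrow> real) \<Rightarrow> (nat \<Rightarrow> real)" where
  "hid n l x = (\<lambda>i. relu (affine n l x i))"

definition run :: "nat \<Rightarrow> layer list \<Rightarrow> (nat \<Rightarrow> real) \<Rightarrow> (nat \<Rightarrow> real)" where
  "run W hs s = foldl (\<lambda>s l. hid W l s) s hs"

lemma run_append: "run W (xs @ ys) s = run W ys (run W xs s)"
  unfolding run_def by simp

lemma run_Cons: "run W (l # xs) s = run W xs (hid W l s)"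
  unfolding run_def by simp

lemma run_snoc: "run W (xs @ [l]) s = hid W l (run W xs s)"
  unfolding run_def by simp

lemma net_eval_Cons2: "ls \<noteq> [] \<Longrightarrow> net_eval n W (l # ls) x = net_eval W W ls (hid n l x)"
  by (cases ls) (simp_all add: hid_def)

lemma net_eval_snoc: "net_eval W W (hs @ [o']) s = affine W o' (run W hs s)"
proof (induction hs arbitrary: s)
  case Nil then show ?case by (simp add: run_def)
next
  case (Cons h hs)
  then show ?case by (simp add: net_eval_Cons2 run_Cons)
qed

lemma fnn_main: "fnn_fun d W (l0 # hs @ [o']) x = affine W o' (run W hs (hid d l0 x)) 0"
  unfolding fnn_fun_def by (simp add: net_eval_Cons2 net_eval_snoc)

definition tent :: "real \<Rightarrow> real" where "tent t = 2 * relu t - 4 * relu (t - 1/2)"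
definition phi :: "real \<Rightarrow> real" where "phi t = t - t^2"

lemma tent_range: "0 \<le> t \<Longrightarrow> t \<le> 1 \<Longrightarrow> 0 \<le> tent t \<and> tent t \<le> 1"
  unfolding tent_def relu_def by (cases "t \<le> 1/2") auto

lemma phi_rec: "0 \<le> t \<Longrightarrow> t \<le> 1 \<Longrightarrow> phi t = tent t / 4 + phi (tent t) / 4"
  unfolding tent_def relu_def phi_def by (cases "t \<le> 1/2") (auto simp: power2_eq_square field_simps)

lemma tent_iter_range: "0 \<le> t \<Longrightarrow> t \<le> 1 \<Longrightarrow> 0 \<le> (tent^^n) t \<and> (tent^^n) t \<le> 1"
  by (induction n) (auto simp: tent_range)

lemma phi_bounds: "0 \<le> t \<Longrightarrow> t \<le> 1 \<Longrightarrow> 0 \<le> phi t \<and> phi t \<le> 1/4"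
proof -
  assume a: "0 \<le> t" "t \<le> 1"
  have "0 \<le> (t - 1/2)^2" by simp
  moreover have "t * t \<le> t" using a mult_left_le by blast
  ultimately show ?thesis using a unfolding phi_def by (auto simp: power2_eq_square algebra_simps)
qed

definition clipR :: "nat \<Rightarrow> nat \<Rightarrow> nat \<Rightarrow> (nat \<times> real) list" where
  "clipR d pj i = (if i < d then [(i,1)] else if i = d+7 \<or> i = d+8 then [(pj,1)] else [])"
definition clipL :: "nat \<Rightarrow> nat \<Rightarrow> real \<Rightarrow> layer" where
  "clipL d pj pb = mkl (clipR d pj) (\<lambda>i. if i = d+7 then pb else if i = d+8 then pb - 1 else 0)"

definition initR :: "nat \<Rightarrow> nat \<Rightarrow> nat \<Rightarrow> (nat \<times> real) list" where
  "initR d k i = (if i < d then [(i,1)]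
     else if i = d \<or> i = d+1 \<or> i = d+6 then [(d+7,1/2),(d+8,-1/2),(k,1/2)]
     else if i = d+2 \<or> i = d+3 then [(d+7,1),(d+8,-1)]
     else if i = d+4 \<or> i = d+5 then [(k,1)] else [])"
definition initL :: "nat \<Rightarrow> nat \<Rightarrow> layer" where
  "initL d k = mkl (initR d k)
   (\<lambda>i. if i = d+1 \<or> i = d+3 \<or> i = d+5 then -1/2 else if i = d+6 then 1 else 0)"

definition iterR :: "nat \<Rightarrow> nat \<Rightarrow> nat \<Rightarrow> (nat \<times> real) list" where
  "iterR d s i = (if i < d then [(i,1)]
     else if i = d \<or> i = d+1 then [(d,2),(d+1,-4)]
     else if i = d+2 \<or> i = d+3 then [(d+2,2),(d+3,-4)]
     else if i = d+4 \<or> i = d+5 then [(d+4,2),(d+5,-4)]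
     else if i = d+6 then [(d+6,1),(d,-4/4^s),(d+1,8/4^s),(d+2,1/4^s),(d+3,-2/4^s),(d+4,1/4^s),(d+5,-2/4^s)]
     else [])"
definition iterL :: "nat \<Rightarrow> nat \<Rightarrow> layer" where
  "iterL d s = mkl (iterR d s) (\<lambda>i. if i = d+1 \<or> i = d+3 \<or> i = d+5 then -1/2 else 0)"

definition outR :: "nat \<Rightarrow> nat \<Rightarrow> (nat \<times> real) list" where
  "outR d i = [(d+7,1),(d+8,-1)]"
definition outL :: "nat \<Rightarrow> layer" where
  "outL d = mkl (outR d) (\<lambda>i. 0)"

lemma clipL_eval:
  assumes "pj < n" "d \<le> n"
  shows "\<And>j. j < d \<Longrightarrow> hid n (clipL d pj pb) s j = relu (s j)"
    "hid n (clipL d pj pb) s (d+7) = relu (s pj + pb)"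
    "hid n (clipL d pj pb) s (d+8) = relu (s pj + pb - 1)"
proof -
  have ok: "\<And>i. \<forall>p\<in>set (clipR d pj i). fst p < n"
    using assms by (auto simp: clipR_def)
  note ev = affine_mkl[where rows="clipR d pj", OF ok]
  show "\<And>j. j < d \<Longrightarrow> hid n (clipL d pj pb) s j = relu (s j)"
    "hid n (clipL d pj pb) s (d+7) = relu (s pj + pb)"
    "hid n (clipL d pj pb) s (d+8) = relu (s pj + pb - 1)"
    by (simp_all add: hid_def clipL_def ev clipR_def add_diff_eq)
qed

definition inv_it :: "nat \<Rightarrow> (nat\<Rightarrow>real) \<Rightarrow> real \<Rightarrow> real \<Rightarrow> nat \<Rightarrow> (nat \<Rightarrow> real) \<Rightarrow> bool" where
 "inv_it d xs y xk r s \<longleftrightarrow> (\<forall>j<d. s j = xs j) \<and>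
   s d = (tent^^r) ((y+xk)/2) \<and> s (d+1) = relu ((tent^^r) ((y+xk)/2) - 1/2) \<and>
   s (d+2) = (tent^^r) y \<and> s (d+3) = relu ((tent^^r) y - 1/2) \<and>
   s (d+4) = (tent^^r) xk \<and> s (d+5) = relu ((tent^^r) xk - 1/2) \<and>
   s (d+6) = 1 + y*xk + (2*phi ((tent^^r) ((y+xk)/2)) - phi ((tent^^r) y)/2 - phi ((tent^^r) xk)/2) / 4^r"

lemma initL_eval:
  assumes W: "d + 9 \<le> W" and k: "k < d" and car: "\<forall>j<d. s j = xs j" and nn: "\<forall>j<d. 0 \<le> xs j"
    and y: "y = s (d+7) - s (d+8)" "0 \<le> y" "y \<le> 1" and xk: "xk = xs k" "xk \<le> 1"
  shows "inv_it d xs y xk 0 (hid W (initL d k) s)"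
proof -
  have ok: "\<And>i. \<forall>p\<in>set (initR d k i). fst p < W"
    using W k by (auto simp: initR_def)
  note ev = affine_mkl[where rows="initR d k", OF ok]
  have sk: "s k = xk" using car k xk by simp
  have xk0: "0 \<le> xk" using nn k xk by simp
  have u: "relu ((y + xk)/2) = (y+xk)/2" "relu y = y" "relu xk = xk" "relu (1 + (y + xk)/2) = 1 + (y+xk)/2"
    using xk0 y by (auto simp: relu_def)
  have R: "1 + (y+xk)/2 = 1 + y*xk + (2*phi ((y+xk)/2) - phi y/2 - phi xk/2)"
    unfolding phi_def by (simp add: power2_eq_square field_simps)
  have s7: "s (d+7) = y + s (d+8)" using y by simp
  have "\<And>i. hid W (initL d k) s i = relu (sum_list (map (\<lambda>p. snd p * s (fst p)) (initR d k i)) +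
       (if i = d+1 \<or> i = d+3 \<or> i = d+5 then -1/2 else if i = d+6 then 1 else 0))"
    by (simp add: hid_def initL_def ev)
  note H = this[unfolded initR_def]
  have h: "\<forall>j<d. hid W (initL d k) s j = xs j"
    "hid W (initL d k) s d = (y+xk)/2"
    "hid W (initL d k) s (d+1) = relu ((y+xk)/2 - 1/2)"
    "hid W (initL d k) s (d+2) = y"
    "hid W (initL d k) s (d+3) = relu (y - 1/2)"
    "hid W (initL d k) s (d+4) = xk"
    "hid W (initL d k) s (d+5) = relu (xk - 1/2)"
    "hid W (initL d k) s (d+6) = 1 + (y+xk)/2"
    using car nn u by (simp_all add: H s7 sk relu_def field_simps)
  show ?thesis unfolding inv_it_def using h R by simp
qed

lemma lin_comb: "(Q::real) \<noteq> 0 \<Longrightarrow> R + (-4/Q)*a + (8/Q)*b + (1/Q)*c + (-2/Q)*e + (1/Q)*f + (-2/Q)*g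
   = R + (-2*(2*a - 4*b) + (2*c - 4*e)/2 + (2*f - 4*g)/2)/Q"
  by (simp add: field_simps)
lemma E_eq: "(q::real) > 0 \<Longrightarrow>
  1 + z + (2*(t0/4 + P0/4) - (t1/4 + P1/4)/2 - (t2/4 + P2/4)/2)/q + (-2*t0 + t1/2 + t2/2)/(4*q) = 1 + z + (2*P0 - P1/2 - P2/2)/(4*q)"
  by (simp add: field_simps)
lemma E_pos: "(q::real) \<ge> 1 \<Longrightarrow> 0 \<le> z \<Longrightarrow> 0 \<le> P0 \<Longrightarrow> P1 \<le> 1/4 \<Longrightarrow> P2 \<le> 1/4 \<Longrightarrow>
   0 \<le> 1 + z + (2*P0 - P1/2 - P2/2)/(4*q)"
proof -
  assume a: "q \<ge> 1" "0 \<le> z" "0 \<le> P0" "P1 \<le> 1/4" "P2 \<le> 1/4"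
  have "(2*P0 - P1/2 - P2/2) \<ge> -1/4" using a by linarith
  then have "(2*P0 - P1/2 - P2/2)/(4*q) \<ge> (-1/4)/(4*q)" using a by (intro divide_right_mono) auto
  moreover have "(-1/4)/(4*q) \<ge> -1" using a by (simp add: field_simps)
  ultimately show ?thesis using a by linarith
qed

lemma tent_relu: "0 \<le> T \<Longrightarrow> T \<le> 1 \<Longrightarrow> 2 * T - 4 * relu (T - 1/2) = tent T"
  unfolding tent_def relu_def by auto

lemma relu_id: "0 \<le> t \<Longrightarrow> relu t = t"
  unfolding relu_def by auto

lemma iterL_eval:
  assumes W: "d + 9 \<le> W" and inv: "inv_it d xs y xk r s" and nn: "\<forall>j<d. 0 \<le> xs j"
    and y: "0 \<le> y" "y \<le> 1" and xk: "0 \<le> xk" "xk \<le> 1"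
  shows "inv_it d xs y xk (Suc r) (hid W (iterL d (Suc r)) s)"
proof -
  have ok: "\<And>i. \<forall>p\<in>set (iterR d (Suc r) i). fst p < W"
    using W by (auto simp: iterR_def)
  note ev = affine_mkl[where rows="iterR d (Suc r)", OF ok]
  have "\<And>i. hid W (iterL d (Suc r)) s i = relu (sum_list (map (\<lambda>p. snd p * s (fst p)) (iterR d (Suc r) i)) +
       (if i = d+1 \<or> i = d+3 \<or> i = d+5 then -1/2 else 0))"
    by (simp add: hid_def iterL_def ev)
  note H = this[unfolded iterR_def]
  define u where "u = (y+xk)/2"
  have u01: "0 \<le> u" "u \<le> 1" using y xk by (auto simp: u_def)
  define T0 where "T0 = (tent^^r) u"
  define T1 where "T1 = (tent^^r) y"
  define T2 where "T2 = (tent^^r) xk"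
  have T0: "0 \<le> T0" "T0 \<le> 1" using tent_iter_range[OF u01] T0_def by auto
  have T1: "0 \<le> T1" "T1 \<le> 1" using tent_iter_range[OF y] T1_def by auto
  have T2: "0 \<le> T2" "T2 \<le> 1" using tent_iter_range[OF xk] T2_def by auto
  have S: "s d = T0" "s (d+1) = relu (T0 - 1/2)" "s (d+2) = T1" "s (d+3) = relu (T1 - 1/2)"
     "s (d+4) = T2" "s (d+5) = relu (T2 - 1/2)"
     "s (d+6) = 1 + y*xk + (2*phi T0 - phi T1/2 - phi T2/2) / 4^r"
     "\<forall>j<d. s j = xs j"
    using inv unfolding inv_it_def T0_def T1_def T2_def u_def by auto
  have t0: "0 \<le> tent T0" "tent T0 \<le> 1" using tent_range[OF T0] by auto
  have t1: "0 \<le> tent T1" "tent T1 \<le> 1" using tent_range[OF T1] by auto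
  have t2: "0 \<le> tent T2" "tent T2 \<le> 1" using tent_range[OF T2] by auto
  have g: "2 * T0 - 4 * relu (T0 - 1/2) = tent T0" "2 * T1 - 4 * relu (T1 - 1/2) = tent T1"
     "2 * T2 - 4 * relu (T2 - 1/2) = tent T2"
    using tent_relu T0 T1 T2 by auto
  have Tn: "(tent^^Suc r) u = tent T0" "(tent^^Suc r) y = tent T1" "(tent^^Suc r) xk = tent T2"
    by (simp_all add: T0_def T1_def T2_def)
  define q :: real where "q = 4^r"
  have q: "q \<ge> 1" unfolding q_def by simp
  have p0: "0 \<le> phi (tent T0)" "phi (tent T1) \<le> 1/4" "phi (tent T2) \<le> 1/4"
    using phi_bounds t0 t1 t2 by auto
  have pr: "phi T0 = tent T0 / 4 + phi (tent T0) / 4" "phi T1 = tent T1 / 4 + phi (tent T1) / 4"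
     "phi T2 = tent T2 / 4 + phi (tent T2) / 4"
    using phi_rec T0 T1 T2 by auto
  define E where "E = 1 + y*xk + (2*phi (tent T0) - phi (tent T1)/2 - phi (tent T2)/2) / (4*q)"
  have R2: "s (d+6) + (- 4 / 4 ^ Suc r) * s d + (8 / 4 ^ Suc r) * s (d+1) + (1 / 4 ^ Suc r) * s (d+2)
      + (- 2 / 4 ^ Suc r) * s (d+3) + (1 / 4 ^ Suc r) * s (d+4) + (- 2 / 4 ^ Suc r) * s (d+5) = E"
  proof -
    have q4: "(4::real) ^ Suc r = 4 * q" by (simp add: q_def)
    have "s (d+6) + (- 4 / 4 ^ Suc r) * s d + (8 / 4 ^ Suc r) * s (d+1) + (1 / 4 ^ Suc r) * s (d+2)
      + (- 2 / 4 ^ Suc r) * s (d+3) + (1 / 4 ^ Suc r) * s (d+4) + (- 2 / 4 ^ Suc r) * s (d+5)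
      = s (d+6) + (-2*(2*s d - 4*s (d+1)) + (2*s (d+2) - 4*s (d+3))/2 + (2*s (d+4) - 4*s (d+5))/2)/(4*q)"
      unfolding q4 using q by (intro lin_comb) auto
    also have "\<dots> = 1 + y*xk + (2*phi T0 - phi T1/2 - phi T2/2)/q + (-2*tent T0 + tent T1/2 + tent T2/2)/(4*q)"
      unfolding S(1-6) g S(7) q_def by simp
    also have "\<dots> = E" unfolding pr E_def using q by (intro E_eq) auto
    finally show ?thesis .
  qed
  have E0: "E \<ge> 0" unfolding E_def using y xk q p0 by (intro E_pos) auto
  have h: "\<forall>j<d. hid W (iterL d (Suc r)) s j = xs j"
    "hid W (iterL d (Suc r)) s d = tent T0"
    "hid W (iterL d (Suc r)) s (d+1) = relu (tent T0 - 1/2)"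
    "hid W (iterL d (Suc r)) s (d+2) = tent T1"
    "hid W (iterL d (Suc r)) s (d+3) = relu (tent T1 - 1/2)"
    "hid W (iterL d (Suc r)) s (d+4) = tent T2"
    "hid W (iterL d (Suc r)) s (d+5) = relu (tent T2 - 1/2)"
    "hid W (iterL d (Suc r)) s (d+6) = E"
  proof -
    have sl: "sum_list (map (\<lambda>p. snd p * s (fst p)) (iterR d (Suc r) (d+6))) = E"
      unfolding R2[symmetric] by (simp add: iterR_def)
    have "\<And>i. hid W (iterL d (Suc r)) s i = relu (sum_list (map (\<lambda>p. snd p * s (fst p)) (iterR d (Suc r) i)) +
       (if i = d+1 \<or> i = d+3 \<or> i = d+5 then -1/2 else 0))"
      by (simp add: hid_def iterL_def ev)
    note H2 = this
    have S1: "s (Suc d) = relu (T0 - 1/2)" using S(2) by simp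
    show "\<forall>j<d. hid W (iterL d (Suc r)) s j = xs j" using S(8) nn by (simp add: H relu_id)
    show "hid W (iterL d (Suc r)) s d = tent T0" using g relu_id[OF t0(1)] by (simp add: H S[simplified] S)
    show "hid W (iterL d (Suc r)) s (d+1) = relu (tent T0 - 1/2)" using g by (simp add: H S[simplified] S)
    show "hid W (iterL d (Suc r)) s (d+2) = tent T1" using g relu_id[OF t1(1)] by (simp add: H S[simplified] S)
    show "hid W (iterL d (Suc r)) s (d+3) = relu (tent T1 - 1/2)" using g by (simp add: H S[simplified] S)
    show "hid W (iterL d (Suc r)) s (d+4) = tent T2" using g relu_id[OF t2(1)] by (simp add: H S[simplified] S)
    show "hid W (iterL d (Suc r)) s (d+5) = relu (tent T2 - 1/2)" using g by (simp add: H S[simplified] S)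
    show "hid W (iterL d (Suc r)) s (d+6) = E" using relu_id[OF E0] by (simp add: H2 sl)
  qed
  show ?thesis unfolding inv_it_def using h Tn
    by (simp add: E_def q_def u_def[symmetric] T0_def[symmetric] T1_def[symmetric] T2_def[symmetric])
qed

lemma iter_all:
  assumes W: "d + 9 \<le> W" and inv: "inv_it d xs y xk 0 s0" and nn: "\<forall>j<d. 0 \<le> xs j"
    and y: "0 \<le> y" "y \<le> 1" and xk: "0 \<le> xk" "xk \<le> 1"
  shows "inv_it d xs y xk r (run W (map (iterL d) [1..<r+1]) s0)"
proof (induction r)
  case 0 then show ?case using inv by (simp add: run_def)
next
  case (Suc r)
  have "[1..<Suc r + 1] = [1..<r+1] @ [Suc r]" by simp
  then show ?case using iterL_eval[OF W Suc nn y xk] by (simp add: run_snoc)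
qed

definition block :: "nat \<Rightarrow> nat \<Rightarrow> nat \<Rightarrow> layer list" where
  "block d m k = initL d k # map (iterL d) [1..<m+1] @ [clipL d (d+6) (-1)]"

lemma clamp: "0 \<le> z \<Longrightarrow> z \<le> 1 \<Longrightarrow> 0 \<le> relu P - relu (P - 1) \<and> relu P - relu (P - 1) \<le> 1 \<and>
   \<bar>relu P - relu (P - 1) - z\<bar> \<le> \<bar>P - z\<bar>"
  unfolding relu_def by auto

lemma block_eval:
  assumes W: "d + 9 \<le> W" and k: "k < d" and car: "\<forall>j<d. s j = xs j" and nn: "\<forall>j<d. 0 \<le> xs j"
    and le1: "\<forall>j<d. xs j \<le> 1"
    and y: "0 \<le> s (d+7) - s (d+8)" "s (d+7) - s (d+8) \<le> 1"
  shows "(\<forall>j<d. run W (block d m k) s j = xs j) \<and>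
    0 \<le> run W (block d m k) s (d+7) - run W (block d m k) s (d+8) \<and>
    run W (block d m k) s (d+7) - run W (block d m k) s (d+8) \<le> 1 \<and>
    \<bar>(run W (block d m k) s (d+7) - run W (block d m k) s (d+8)) - (s (d+7) - s (d+8)) * xs k\<bar> \<le> 1 / (2 * 4^m)"
proof -
  define yy where "yy = s (d+7) - s (d+8)"
  define xk where "xk = xs k"
  have xk: "0 \<le> xk" "xk \<le> 1" using nn le1 k by (auto simp: xk_def)
  have y01: "0 \<le> yy" "yy \<le> 1" using y by (auto simp: yy_def)
  have i0: "inv_it d xs yy xk 0 (hid W (initL d k) s)"
    using initL_eval[OF W k car nn yy_def y01 xk_def xk(2)] .
  define s2 where "s2 = run W (map (iterL d) [1..<m+1]) (hid W (initL d k) s)"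
  have im: "inv_it d xs yy xk m s2" unfolding s2_def using iter_all[OF W i0 nn y01 xk] .
  have rb: "run W (block d m k) s = hid W (clipL d (d+6) (-1)) s2"
    unfolding block_def s2_def by (simp add: run_Cons run_snoc)
  have lt: "d + 6 < W" using W by simp
  have dW: "d \<le> W" using W by simp
  note ce = clipL_eval[OF lt dW]
  define u where "u = (yy+xk)/2"
  have u01: "0 \<le> u" "u \<le> 1" using y01 xk by (auto simp: u_def)
  define T0 where "T0 = (tent^^m) u"
  define T1 where "T1 = (tent^^m) yy"
  define T2 where "T2 = (tent^^m) xk"
  have T0: "0 \<le> T0" "T0 \<le> 1" using tent_iter_range[OF u01] T0_def by auto
  have T1: "0 \<le> T1" "T1 \<le> 1" using tent_iter_range[OF y01] T1_def by auto
  have T2: "0 \<le> T2" "T2 \<le> 1" using tent_iter_range[OF xk] T2_def by auto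
  have R: "s2 (d+6) = 1 + yy*xk + (2*phi T0 - phi T1/2 - phi T2/2) / 4^m"
    and car2: "\<forall>j<d. s2 j = xs j"
    using im unfolding inv_it_def T0_def T1_def T2_def u_def by auto
  have pb: "0 \<le> phi T0" "phi T0 \<le> 1/4" "0 \<le> phi T1" "phi T1 \<le> 1/4" "0 \<le> phi T2" "phi T2 \<le> 1/4"
    using phi_bounds T0 T1 T2 by auto
  have err: "\<bar>(2*phi T0 - phi T1/2 - phi T2/2) / 4^m\<bar> \<le> 1 / (2 * 4^m)"
  proof -
    have "\<bar>2*phi T0 - phi T1/2 - phi T2/2\<bar> \<le> 1/2" using pb by linarith
    then show ?thesis by (simp add: divide_right_mono field_simps)
  qed
  define P where "P = s2 (d+6) - 1"
  have c: "0 \<le> relu P - relu (P - 1) \<and> relu P - relu (P - 1) \<le> 1 \<and>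
   \<bar>relu P - relu (P - 1) - yy*xk\<bar> \<le> \<bar>P - yy*xk\<bar>"
    using y01 xk by (intro clamp) (auto intro: mult_le_one)
  have P: "\<bar>P - yy*xk\<bar> \<le> 1 / (2 * 4^m)" using err R P_def by simp
  have o7: "hid W (clipL d (d+6) (-1)) s2 (d+7) = relu P" using ce(2) P_def by simp
  have o8: "hid W (clipL d (d+6) (-1)) s2 (d+8) = relu (P - 1)" using ce(3) P_def by simp
  show ?thesis unfolding rb o7 o8 yy_def[symmetric] xk_def[symmetric]
    using c P car2 nn ce(1) by (auto simp: relu_id)
qed

definition net :: "nat \<Rightarrow> nat \<Rightarrow> layer list" where
  "net d m = clipL d 0 0 # concat (map (block d m) [1..<d]) @ [outL d]"

lemma chain:
  assumes W: "d + 9 \<le> W" and d: "0 < d" and x: "\<forall>i<d. 0 \<le> x i \<and> x i \<le> 1"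
  shows "Suc n \<le> d \<Longrightarrow>
    (\<forall>j<d. run W (concat (map (block d m) [1..<Suc n])) (hid d (clipL d 0 0) x) j = x j) \<and>
    0 \<le> run W (concat (map (block d m) [1..<Suc n])) (hid d (clipL d 0 0) x) (d+7)
       - run W (concat (map (block d m) [1..<Suc n])) (hid d (clipL d 0 0) x) (d+8) \<and>
    run W (concat (map (block d m) [1..<Suc n])) (hid d (clipL d 0 0) x) (d+7)
       - run W (concat (map (block d m) [1..<Suc n])) (hid d (clipL d 0 0) x) (d+8) \<le> 1 \<and>
    \<bar>run W (concat (map (block d m) [1..<Suc n])) (hid d (clipL d 0 0) x) (d+7)
       - run W (concat (map (block d m) [1..<Suc n])) (hid d (clipL d 0 0) x) (d+8)
       - (\<Prod>i<Suc n. x i)\<bar> \<le> n / (2 * 4^m)"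
proof (induction n)
  case 0
  have ce: "\<And>j. j < d \<Longrightarrow> hid d (clipL d 0 0) x j = relu (x j)"
    "hid d (clipL d 0 0) x (d+7) = relu (x 0 + 0)"
    "hid d (clipL d 0 0) x (d+8) = relu (x 0 + 0 - 1)"
    using clipL_eval[OF d order.refl] by auto
  have x0: "0 \<le> x 0" "x 0 \<le> 1" using x d by auto
  show ?case using ce x x0 by (simp add: run_def relu_def)
next
  case (Suc n)
  define S where "S = run W (concat (map (block d m) [1..<Suc n])) (hid d (clipL d 0 0) x)"
  have IH: "(\<forall>j<d. S j = x j)" "0 \<le> S (d+7) - S (d+8)" "S (d+7) - S (d+8) \<le> 1"
      "\<bar>S (d+7) - S (d+8) - (\<Prod>i<Suc n. x i)\<bar> \<le> n / (2 * 4^m)"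
    using Suc unfolding S_def by auto
  have k: "Suc n < d" using Suc by simp
  have eq: "run W (concat (map (block d m) [1..<Suc (Suc n)])) (hid d (clipL d 0 0) x)
     = run W (block d m (Suc n)) S"
    unfolding S_def by (simp add: run_append)
  have nn: "\<forall>j<d. 0 \<le> x j" "\<forall>j<d. x j \<le> 1" using x by auto
  note B = block_eval[OF W k IH(1) nn IH(2) IH(3), of m]
  define y' where "y' = run W (block d m (Suc n)) S (d+7) - run W (block d m (Suc n)) S (d+8)"
  define y where "y = S (d+7) - S (d+8)"
  define p where "p = (\<Prod>i<Suc n. x i)"
  have xk: "0 \<le> x (Suc n)" "x (Suc n) \<le> 1" using x k by auto
  have e1: "\<bar>y' - y * x (Suc n)\<bar> \<le> 1 / (2 * 4^m)" using B unfolding y'_def y_def by auto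
  have e2: "\<bar>y - p\<bar> \<le> n / (2 * 4^m)" using IH(4) unfolding y_def p_def by simp
  have "\<bar>y * x (Suc n) - p * x (Suc n)\<bar> = \<bar>y - p\<bar> * x (Suc n)"
    using xk by (simp add: abs_mult left_diff_distrib[symmetric])
  also have "\<dots> \<le> \<bar>y - p\<bar>" using xk by (simp add: mult_left_le)
  finally have e3: "\<bar>y * x (Suc n) - p * x (Suc n)\<bar> \<le> n / (2 * 4^m)" using e2 by linarith
  have "\<bar>y' - p * x (Suc n)\<bar> \<le> 1 / (2 * 4^m) + n / (2 * 4^m)" using e1 e3 by linarith
  also have "\<dots> = real (Suc n) / (2 * 4^m)" by (simp add: field_simps)
  finally have e4: "\<bar>y' - p * x (Suc n)\<bar> \<le> real (Suc n) / (2 * 4^m)" .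
  have pr: "(\<Prod>i<Suc (Suc n). x i) = p * x (Suc n)" unfolding p_def by simp
  show ?case unfolding eq pr using B e4 unfolding y'_def by auto
qed

lemma net_correct:
  assumes W: "d + 9 \<le> W" and d: "0 < d" and x: "\<forall>i<d. 0 \<le> x i \<and> x i \<le> 1"
  shows "\<bar>fnn_fun d W (net d m) x - (\<Prod>i<d. x i)\<bar> \<le> (d - 1) / (2 * 4^m)"
proof -
  obtain n where n: "d = Suc n" using d by (cases d) auto
  have ok: "\<And>i. \<forall>p\<in>set (outR d i). fst p < W" using W by (auto simp: outR_def)
  have "fnn_fun d W (net d m) x = affine W (outL d) (run W (concat (map (block d m) [1..<d])) (hid d (clipL d 0 0) x)) 0"
    unfolding net_def by (rule fnn_main)
  also have "\<dots> = run W (concat (map (block d m) [1..<d])) (hid d (clipL d 0 0) x) (d+7)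
       - run W (concat (map (block d m) [1..<d])) (hid d (clipL d 0 0) x) (d+8)"
    unfolding outL_def affine_mkl[where rows="outR d", OF ok] by (simp add: outR_def)
  finally show ?thesis using chain[OF W d x, of n m] n by simp
qed

lemma len_net: "length (net d m) = (d - 1) * (m + 2) + 2"
proof -
  have "length (concat (map (block d m) [1..<d])) = (d - 1) * (m + 2)"
    by (simp add: length_concat block_def o_def sum_list_triv)
  then show ?thesis by (simp add: net_def)
qed

lemma sum_abs_bound: "sum_list (map (\<lambda>p. \<bar>snd p\<bar>) (iterR d s i)) \<le> 19"
proof -
  have q: "(1::real) \<le> 4^s" by simp
  have a: "\<And>c::real. 0 \<le> c \<Longrightarrow> c / 4^s \<le> c" using q by (simp add: divide_le_eq mult_le_cancel_left1 order_trans)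
  show ?thesis unfolding iterR_def using a[of 4] a[of 8] a[of 1] a[of 2]
    by (auto simp: abs_divide)
qed

lemma weights_net: "\<forall>l\<in>set (net d m). \<forall>i j. \<bar>fst l i j\<bar> \<le> 19 \<and> \<bar>snd l i\<bar> \<le> 19"
proof -
  have cl: "\<And>pj pb i j. pb \<in> {0, -1} \<Longrightarrow> \<bar>fst (clipL d pj pb) i j\<bar> \<le> 19 \<and> \<bar>snd (clipL d pj pb) i\<bar> \<le> 19"
  proof -
    fix pj pb i j assume "(pb::real) \<in> {0, -1}"
    moreover have "\<bar>fst (clipL d pj pb) i j\<bar> \<le> sum_list (map (\<lambda>p. \<bar>snd p\<bar>) (clipR d pj i))"
      unfolding clipL_def by (rule mkl_bound)
    moreover have "sum_list (map (\<lambda>p. \<bar>snd p\<bar>) (clipR d pj i)) \<le> 1" by (simp add: clipR_def)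
    ultimately show "\<bar>fst (clipL d pj pb) i j\<bar> \<le> 19 \<and> \<bar>snd (clipL d pj pb) i\<bar> \<le> 19"
      by (auto simp: clipL_def mkl_def)
  qed
  have il: "\<And>k i j. \<bar>fst (initL d k) i j\<bar> \<le> 19 \<and> \<bar>snd (initL d k) i\<bar> \<le> 19"
  proof -
    fix k i j
    have "\<bar>fst (initL d k) i j\<bar> \<le> sum_list (map (\<lambda>p. \<bar>snd p\<bar>) (initR d k i))"
      unfolding initL_def by (rule mkl_bound)
    moreover have "sum_list (map (\<lambda>p. \<bar>snd p\<bar>) (initR d k i)) \<le> 2" by (simp add: initR_def)
    ultimately show "\<bar>fst (initL d k) i j\<bar> \<le> 19 \<and> \<bar>snd (initL d k) i\<bar> \<le> 19"
      by (auto simp: initL_def mkl_def)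
  qed
  have tl: "\<And>s i j. \<bar>fst (iterL d s) i j\<bar> \<le> 19 \<and> \<bar>snd (iterL d s) i\<bar> \<le> 19"
  proof -
    fix s i j
    have "\<bar>fst (iterL d s) i j\<bar> \<le> sum_list (map (\<lambda>p. \<bar>snd p\<bar>) (iterR d s i))"
      unfolding iterL_def by (rule mkl_bound)
    then show "\<bar>fst (iterL d s) i j\<bar> \<le> 19 \<and> \<bar>snd (iterL d s) i\<bar> \<le> 19"
      using sum_abs_bound[of d s i] by (auto simp: iterL_def mkl_def)
  qed
  have ol: "\<And>i j. \<bar>fst (outL d) i j\<bar> \<le> 19 \<and> \<bar>snd (outL d) i\<bar> \<le> 19"
  proof -
    fix i j
    have "\<bar>fst (outL d) i j\<bar> \<le> sum_list (map (\<lambda>p. \<bar>snd p\<bar>) (outR d i))"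
      unfolding outL_def by (rule mkl_bound)
    then show "\<bar>fst (outL d) i j\<bar> \<le> 19 \<and> \<bar>snd (outL d) i\<bar> \<le> 19"
      by (auto simp: outL_def mkl_def outR_def)
  qed
  show ?thesis unfolding net_def block_def using cl il tl ol by auto
qed

lemma relu_fnn_net:
  assumes "C \<ge> 19"
  shows "relu_fnn d W (length (net d m)) C (net d m)"
proof -
  have w: "\<forall>l\<in>set (net d m). \<forall>i j. \<bar>fst l i j\<bar> \<le> C \<and> \<bar>snd l i\<bar> \<le> C"
    using weights_net[of d m] assms by (meson order_trans)
  have "length (net d m) \<ge> 1" by (simp add: net_def)
  moreover have "\<forall>k<length (net d m). \<forall>i. \<bar>snd (net d m ! k) i\<bar> \<le> C \<and> (\<forall>j. \<bar>fst (net d m ! k) i j\<bar> \<le> C)"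
    using w nth_mem by blast
  ultimately show ?thesis unfolding relu_fnn_def Let_def by simp
qed

lemma m_lower:
  assumes "0 < v"
  shows "v \<le> (4::real) ^ nat \<lceil>log 4 v\<rceil>"
proof -
  have "log 4 v \<le> real (nat \<lceil>log 4 v\<rceil>)" by linarith
  then have "(4::real) powr (log 4 v) \<le> 4 powr real (nat \<lceil>log 4 v\<rceil>)" by (intro powr_mono) auto
  then show ?thesis using assms by (simp add: powr_realpow)
qed

lemma m_upper:
  assumes "0 < v"
  shows "real (nat \<lceil>log 4 v\<rceil>) \<le> max 0 (ln v) + 1"
proof (cases "log 4 v \<le> 0")
  case True
  then have "\<lceil>log 4 v\<rceil> \<le> 0" by linarith
  then show ?thesis by simp
next
  case False
  have l4: "1 \<le> ln (4::real)"
  proof -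
    have "exp 1 \<le> (4::real)" using exp_le by linarith
    then have "ln (exp 1) \<le> ln (4::real)" by (subst ln_le_cancel_iff) auto
    then show ?thesis by simp
  qed
  have lv: "0 < ln v"
  proof (rule ccontr)
    assume "\<not> 0 < ln v"
    then have "ln v / ln 4 \<le> 0" using l4 by (intro divide_nonpos_pos) auto
    then show False using False by (simp add: log_def)
  qed
  have "log 4 v = ln v / ln 4" by (simp add: log_def)
  also have "\<dots> \<le> ln v" using l4 lv by (simp add: divide_le_eq mult_le_cancel_left1)
  finally have "log 4 v \<le> ln v" .
  moreover have "real (nat \<lceil>log 4 v\<rceil>) \<le> log 4 v + 1" using False by linarith
  ultimately show ?thesis by linarith
qed

lemma d_le_pow:
  assumes "1 < d"
  shows "real d \<le> 2 ^ nat \<lceil>log 2 (real d)\<rceil>"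
proof -
  have "log 2 (real d) \<le> real (nat \<lceil>log 2 (real d)\<rceil>)" by linarith
  then have "(2::real) powr (log 2 (real d)) \<le> 2 powr real (nat \<lceil>log 2 (real d)\<rceil>)" by (intro powr_mono) auto
  moreover have "(2::real) powr real (nat \<lceil>log 2 (real d)\<rceil>) = 2 ^ nat \<lceil>log 2 (real d)\<rceil>"
    by (rule powr_realpow) simp
  moreover have "(2::real) powr (log 2 (real d)) = real d" using assms by simp
  ultimately show ?thesis by linarith
qed

theorem lemma13:
  fixes d :: nat
  assumes "d > 1"
  shows "let a = nat \<lceil>log 2 (real d)\<rceil> in
    \<exists>C::real. \<forall>\<epsilon>::real.
      0 < \<epsilon> \<and> ((3::real) ^ (a - 1) - 1 \<noteq> 0 \<longrightarrow> \<epsilon> \<le> (3 ^ a - 1) / (3 ^ (a - 1) - 1)) \<longrightarrow>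
      (\<exists>L ls. relu_fnn d (21 * 2 ^ (a - 1)) L C ls \<and>
         real L \<le> C * max 1 (ln ((3 ^ a - 1) / (2 * \<epsilon>))) \<and>
         (\<forall>x. (\<forall>i<d. 0 \<le> x i \<and> x i \<le> 1) \<longrightarrow>
            \<bar>fnn_fun d (21 * 2 ^ (a - 1)) ls x - (\<Prod>i<d. x i)\<bar> \<le> \<epsilon>))"
proof -
  define a where "a = nat \<lceil>log 2 (real d)\<rceil>"
  define W :: nat where "W = 21 * 2 ^ (a - 1)"
  have dpow: "real d \<le> 2 ^ a" unfolding a_def using d_le_pow[OF assms] .
  have a1: "a \<ge> 1"
  proof (rule ccontr)
    assume "\<not> a \<ge> 1" then have "a = 0" by simp
    then show False using dpow assms by simp
  qed
  have "(2::real) ^ a = 2 * 2 ^ (a - 1)" using a1 by (metis Suc_diff_1 less_le_trans power_Suc zero_less_one)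
  then have "real d \<le> 2 * 2 ^ (a - 1)" using dpow by simp
  then have "d \<le> 2 * 2 ^ (a - 1)" by (metis of_nat_le_iff of_nat_mult of_nat_numeral of_nat_power)
  then have W: "d + 9 \<le> W" unfolding W_def using assms by linarith
  define K :: real where "K = (3 ^ a - 1) / 2"
  have "(3::real) ^ a \<ge> 3 ^ 1" using a1 by (intro power_increasing) auto
  then have K1: "K \<ge> 1" unfolding K_def by simp
  define C :: real where "C = real d * (real d + 4) + 21"
  have main: "\<And>\<epsilon>. 0 < \<epsilon> \<Longrightarrow> (\<exists>L ls. relu_fnn d W L C ls \<and>
         real L \<le> C * max 1 (ln (K / \<epsilon>)) \<and>
         (\<forall>x. (\<forall>i<d. 0 \<le> x i \<and> x i \<le> 1) \<longrightarrow>
            \<bar>fnn_fun d W ls x - (\<Prod>i<d. x i)\<bar> \<le> \<epsilon>))"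
  proof -
    fix \<epsilon> :: real assume e: "0 < \<epsilon>"
    define m where "m = nat \<lceil>log 4 (real d / \<epsilon>)\<rceil>"
    have dpos: "0 < real d / \<epsilon>" using assms e by simp
    have m1: "real d / \<epsilon> \<le> 4 ^ m" unfolding m_def using m_lower[OF dpos] .
    have m2: "real m \<le> max 0 (ln (real d / \<epsilon>)) + 1" unfolding m_def using m_upper[OF dpos] .
    define M where "M = max 1 (ln (K / \<epsilon>))"
    have M1: "M \<ge> 1" unfolding M_def by simp
    have "ln (real d / \<epsilon>) = ln (real d) - ln \<epsilon>" using assms e by (simp add: ln_div)
    moreover have "ln (K / \<epsilon>) = ln K - ln \<epsilon>" using K1 e by (simp add: ln_div)
    moreover have "ln K \<ge> 0" using K1 by simp
    moreover have "ln (real d) \<ge> 0" using assms by simp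
    moreover have "ln (real d) \<le> real d" using assms ln_le_minus_one[of "real d"] by simp
    ultimately have m3: "real m \<le> real d + M + 1" using m2 unfolding M_def by linarith
    have "real (length (net d m)) = real (d - 1) * (real m + 2) + 2" by (simp only: len_net of_nat_add of_nat_mult) simp
    also have "\<dots> \<le> real d * (real m + 2) + 2" by (intro add_right_mono mult_right_mono) auto
    also have "\<dots> \<le> real d * (real d + M + 3) + 2" using m3 by (intro add_right_mono mult_left_mono) auto
    also have "\<dots> \<le> C * M"
    proof -
      have "real d * (real d + M + 3) + 2 = real d * real d + real d * M + 3 * real d + 2" by (simp add: algebra_simps)
      also have "\<dots> \<le> real d * real d * M + real d * M + 3 * real d * M + 21 * M"
        using M1 by (intro add_mono) (auto intro: mult_right_mono[of 1 M, simplified] mult_left_mono[of 1 M, simplified])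
      also have "\<dots> = C * M" unfolding C_def by (simp add: algebra_simps)
      finally show ?thesis .
    qed
    finally have L: "real (length (net d m)) \<le> C * M" .
    have err: "real (d - 1) / (2 * 4 ^ m) \<le> \<epsilon>"
    proof -
      have "real (d - 1) \<le> real d" by simp
      also have "\<dots> \<le> \<epsilon> * 4 ^ m" using m1 e by (simp add: divide_le_eq mult.commute)
      also have "\<dots> \<le> \<epsilon> * (2 * 4 ^ m)" using e by simp
      finally show ?thesis by (simp add: divide_le_eq)
    qed
    have rf: "relu_fnn d W (length (net d m)) C (net d m)" by (rule relu_fnn_net) (simp add: C_def)
    show "\<exists>L ls. relu_fnn d W L C ls \<and> real L \<le> C * max 1 (ln (K / \<epsilon>)) \<and>
         (\<forall>x. (\<forall>i<d. 0 \<le> x i \<and> x i \<le> 1) \<longrightarrow> \<bar>fnn_fun d W ls x - (\<Prod>i<d. x i)\<bar> \<le> \<epsilon>)"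
      using rf L err net_correct[OF W] assms unfolding M_def
      by (intro exI[of _ "length (net d m)"] exI[of _ "net d m"]) (auto intro: order_trans)
  qed
  have kk: "\<And>\<epsilon>. K / \<epsilon> = (3^a - 1)/(2*\<epsilon>)" unfolding K_def by simp
  show ?thesis unfolding Let_def a_def[symmetric] W_def[symmetric]
    apply (rule exI[of _ C])
    apply (intro allI impI)
    using main kk by metis
qed

end
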